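(* Let $B$ be the definite quaternion algebra over $\mathbb{Q}$ of discriminant $p$, $\mathcal{O}$ a maximal order of $B$, and $\mathfrak{P}$ the two-sided prime of $\mathcal{O}$ above $p$, with an identification $\mathcal{O}/\mathfrak{P}\cong\mathbb{F}_{p^2}$. Let $H\in\Lambda^{\mathrm{np}}$ and let $\Gamma\subseteq\operatorname{Aut}(H)$ be a subgroup of order prime to $p$. Then reduction modulo $\mathfrak{P}$ gives injective homomorphisms $\Gamma\hookrightarrow\mathrm{SL}_2(\mathbb{F}_{p^2})$ and $\Gamma/\{\pm1\}\hookrightarrow\mathrm{PGL}_2(\mathbb{F}_{p^2})$.
   Context: Let $x\mapsto\bar x$ be the canonical involution of $B$ and for a matrix $\alpha$ over $B$ let $\alpha^\dagger$ be its conjugate transpose. $\Lambda^{\mathrm{np}}$ is the set of matrices $H = \begin{pmatrix} ps & r\\ \bar r & pt\end{pmatrix}\in M_2(\mathcal{O})$ with $s,t$ positive integers, $r\in\mathfrak{P}$, and $p^2st - r\bar r = p$. For such $H$, $\operatorname{Aut}(H) = \{\alpha\in\mathrm{GL}_2(\mathcal{O}) : \alpha^\dagger H\alpha = H\}$ (a finite group). *)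

theory Defs
  imports "HOL-Analysis.Analysis"
begin

text \<open>Elements x0 + x1 i + x2 j + x3 k with i^2 = a, j^2 = b, k = ij = -ji.
  Every quaternion algebra over Q is isomorphic to one of these.\<close>

datatype quat = Quat (q0: rat) (q1: rat) (q2: rat) (q3: rat)

definition qzero :: quat where "qzero = Quat 0 0 0 0"
definition qone :: quat where "qone = Quat 1 0 0 0"
definition qof_rat :: "rat \<Rightarrow> quat" where "qof_rat c = Quat c 0 0 0"
definition qof_int :: "int \<Rightarrow> quat" where "qof_int n = qof_rat (of_int n)"
definition qadd :: "quat \<Rightarrow> quat \<Rightarrow> quat" where
  "qadd x y = Quat (q0 x + q0 y) (q1 x + q1 y) (q2 x + q2 y) (q3 x + q3 y)"
definition qneg :: "quat \<Rightarrow> quat" where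
  "qneg x = Quat (- q0 x) (- q1 x) (- q2 x) (- q3 x)"
definition qscale :: "rat \<Rightarrow> quat \<Rightarrow> quat" where
  "qscale c x = Quat (c * q0 x) (c * q1 x) (c * q2 x) (c * q3 x)"

definition qmul :: "rat \<Rightarrow> rat \<Rightarrow> quat \<Rightarrow> quat \<Rightarrow> quat" where
  "qmul a b x y = Quat
     (q0 x * q0 y + a * q1 x * q1 y + b * q2 x * q2 y - a * b * q3 x * q3 y)
     (q0 x * q1 y + q1 x * q0 y - b * q2 x * q3 y + b * q3 x * q2 y)
     (q0 x * q2 y + q2 x * q0 y + a * q1 x * q3 y - a * q3 x * q1 y)
     (q0 x * q3 y + q3 x * q0 y + q1 x * q2 y - q2 x * q1 y)"

definition qconj :: "quat \<Rightarrow> quat" where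
  "qconj x = Quat (q0 x) (- q1 x) (- q2 x) (- q3 x)"
definition qnrd :: "rat \<Rightarrow> rat \<Rightarrow> quat \<Rightarrow> rat" where
  "qnrd a b x = q0 x ^ 2 - a * q1 x ^ 2 - b * q2 x ^ 2 + a * b * q3 x ^ 2"
definition qtrd :: "quat \<Rightarrow> rat" where
  "qtrd x = 2 * q0 x"

text \<open>Definite: the reduced norm is positive definite (B \<otimes> R is the Hamilton quaternions).\<close>
definition definite_quat :: "rat \<Rightarrow> rat \<Rightarrow> bool" where
  "definite_quat a b \<longleftrightarrow> (\<forall>x. x \<noteq> qzero \<longrightarrow> qnrd a b x > 0)"

definition lin_comb :: "(nat \<Rightarrow> rat) \<Rightarrow> (nat \<Rightarrow> quat) \<Rightarrow> quat" where
  "lin_comb c e = Quat (\<Sum>k<4. c k * q0 (e k)) (\<Sum>k<4. c k * q1 (e k))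
                       (\<Sum>k<4. c k * q2 (e k)) (\<Sum>k<4. c k * q3 (e k))"

definition q_indep :: "(nat \<Rightarrow> quat) \<Rightarrow> bool" where
  "q_indep e \<longleftrightarrow> (\<forall>c. lin_comb c e = qzero \<longrightarrow> (\<forall>k<4. c k = 0))"

definition zspan :: "(nat \<Rightarrow> quat) \<Rightarrow> quat set" where
  "zspan e = {lin_comb (\<lambda>k. of_int (n k)) e | n :: nat \<Rightarrow> int. True}"

definition lattice_basis :: "quat set \<Rightarrow> (nat \<Rightarrow> quat) \<Rightarrow> bool" where
  "lattice_basis \<O> e \<longleftrightarrow> q_indep e \<and> \<O> = zspan e"

definition is_order :: "rat \<Rightarrow> rat \<Rightarrow> quat set \<Rightarrow> bool" where
  "is_order a b \<O> \<longleftrightarrow> (\<exists>e. lattice_basis \<O> e) \<and> qone \<in> \<O> \<and>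
     (\<forall>x\<in>\<O>. \<forall>y\<in>\<O>. qmul a b x y \<in> \<O>)"

definition maximal_order :: "rat \<Rightarrow> rat \<Rightarrow> quat set \<Rightarrow> bool" where
  "maximal_order a b \<O> \<longleftrightarrow> is_order a b \<O> \<and>
     (\<forall>\<O>'. is_order a b \<O>' \<and> \<O> \<subseteq> \<O>' \<longrightarrow> \<O>' = \<O>)"

definition basis_disc :: "rat \<Rightarrow> rat \<Rightarrow> (nat \<Rightarrow> quat) \<Rightarrow> rat" where
  "basis_disc a b e = (\<Sum>\<sigma> \<in> {\<sigma>. \<sigma> permutes {0..<4::nat}}.
      of_int (sign \<sigma>) * (\<Prod>i<4. qtrd (qmul a b (e i) (e (\<sigma> i)))))"

text \<open>B has discriminant D iff (any, equivalently some) maximal order has reduced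
  discriminant D, i.e. |det (trd (e_i e_j))| = D^2 for a Z-basis e.\<close>
definition quat_disc_is :: "rat \<Rightarrow> rat \<Rightarrow> nat \<Rightarrow> bool" where
  "quat_disc_is a b D \<longleftrightarrow> (\<exists>\<O> e. maximal_order a b \<O> \<and> lattice_basis \<O> e \<and>
      \<bar>basis_disc a b e\<bar> = of_nat (D ^ 2))"

definition two_sided_ideal :: "rat \<Rightarrow> rat \<Rightarrow> quat set \<Rightarrow> quat set \<Rightarrow> bool" where
  "two_sided_ideal a b \<O> P \<longleftrightarrow> P \<subseteq> \<O> \<and> qzero \<in> P \<and>
     (\<forall>x\<in>P. \<forall>y\<in>P. qadd x y \<in> P) \<and> (\<forall>x\<in>P. qneg x \<in> P) \<and>
     (\<forall>x\<in>\<O>. \<forall>y\<in>P. qmul a b x y \<in> P \<and> qmul a b y x \<in> P)"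

definition two_sided_prime_above :: "rat \<Rightarrow> rat \<Rightarrow> quat set \<Rightarrow> nat \<Rightarrow> quat set \<Rightarrow> bool" where
  "two_sided_prime_above a b \<O> p P \<longleftrightarrow> two_sided_ideal a b \<O> P \<and> P \<noteq> \<O> \<and>
     (\<forall>x\<in>\<O>. \<forall>y\<in>\<O>. (\<forall>z\<in>\<O>. qmul a b (qmul a b x z) y \<in> P) \<longrightarrow> x \<in> P \<or> y \<in> P) \<and>
     qof_int (int p) \<in> P"

datatype qmat = QMat (m11: quat) (m12: quat) (m21: quat) (m22: quat)

definition qmat_one :: qmat where "qmat_one = QMat qone qzero qzero qone"
definition qmat_neg :: "qmat \<Rightarrow> qmat" where
  "qmat_neg A = QMat (qneg (m11 A)) (qneg (m12 A)) (qneg (m21 A)) (qneg (m22 A))"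
definition qmat_mul :: "rat \<Rightarrow> rat \<Rightarrow> qmat \<Rightarrow> qmat \<Rightarrow> qmat" where
  "qmat_mul a b A C = QMat
     (qadd (qmul a b (m11 A) (m11 C)) (qmul a b (m12 A) (m21 C)))
     (qadd (qmul a b (m11 A) (m12 C)) (qmul a b (m12 A) (m22 C)))
     (qadd (qmul a b (m21 A) (m11 C)) (qmul a b (m22 A) (m21 C)))
     (qadd (qmul a b (m21 A) (m12 C)) (qmul a b (m22 A) (m22 C)))"
definition qmat_dagger :: "qmat \<Rightarrow> qmat" where
  "qmat_dagger A = QMat (qconj (m11 A)) (qconj (m21 A)) (qconj (m12 A)) (qconj (m22 A))"

definition in_M2 :: "quat set \<Rightarrow> qmat \<Rightarrow> bool" where
  "in_M2 \<O> A \<longleftrightarrow> m11 A \<in> \<O> \<and> m12 A \<in> \<O> \<and> m21 A \<in> \<O> \<and> m22 A \<in> \<O>"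

definition GL2 :: "rat \<Rightarrow> rat \<Rightarrow> quat set \<Rightarrow> qmat set" where
  "GL2 a b \<O> = {A. in_M2 \<O> A \<and> (\<exists>C. in_M2 \<O> C \<and> qmat_mul a b A C = qmat_one \<and>
                                      qmat_mul a b C A = qmat_one)}"

definition Aut :: "rat \<Rightarrow> rat \<Rightarrow> quat set \<Rightarrow> qmat \<Rightarrow> qmat set" where
  "Aut a b \<O> H = {\<alpha> \<in> GL2 a b \<O>. qmat_mul a b (qmat_mul a b (qmat_dagger \<alpha>) H) \<alpha> = H}"

definition Lambda_np :: "rat \<Rightarrow> rat \<Rightarrow> nat \<Rightarrow> quat set \<Rightarrow> qmat set" where
  "Lambda_np a b p P = {QMat (qof_int (int p * s)) r (qconj r) (qof_int (int p * t)) | s t r.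
      s > 0 \<and> t > 0 \<and> r \<in> P \<and>
      qmul a b r (qconj r) = qof_int (int p ^ 2 * s * t - int p)}"

definition qmat_subgroup :: "rat \<Rightarrow> rat \<Rightarrow> qmat set \<Rightarrow> qmat set \<Rightarrow> bool" where
  "qmat_subgroup a b \<Gamma> G \<longleftrightarrow> \<Gamma> \<subseteq> G \<and> qmat_one \<in> \<Gamma> \<and>
     (\<forall>x\<in>\<Gamma>. \<forall>y\<in>\<Gamma>. qmat_mul a b x y \<in> \<Gamma>) \<and>
     (\<forall>x\<in>\<Gamma>. \<exists>y\<in>\<Gamma>. qmat_mul a b x y = qmat_one \<and> qmat_mul a b y x = qmat_one)"

text \<open>red : \<O> \<rightarrow> F is a surjective ring homomorphism with kernel P, i.e. an
  identification \<O>/P \<cong> F.\<close>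
definition reduction_map :: "rat \<Rightarrow> rat \<Rightarrow> quat set \<Rightarrow> quat set \<Rightarrow> (quat \<Rightarrow> 'f::field) \<Rightarrow> bool" where
  "reduction_map a b \<O> P red \<longleftrightarrow>
     red qone = 1 \<and>
     (\<forall>x\<in>\<O>. \<forall>y\<in>\<O>. red (qadd x y) = red x + red y) \<and>
     (\<forall>x\<in>\<O>. \<forall>y\<in>\<O>. red (qmul a b x y) = red x * red y) \<and>
     red ` \<O> = UNIV \<and> P = {x \<in> \<O>. red x = 0}"

definition qm_entry :: "qmat \<Rightarrow> 2 \<Rightarrow> 2 \<Rightarrow> quat" where
  "qm_entry A i j = (if i = 1 then (if j = 1 then m11 A else m12 A)
                               else (if j = 1 then m21 A else m22 A))"

definition red2 :: "(quat \<Rightarrow> 'f::field) \<Rightarrow> qmat \<Rightarrow> 'f^2^2" where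
  "red2 red A = (\<chi> i j. red (qm_entry A i j))"

end

theory Submission
  imports Defs "HOL-Algebra.Multiplicative_Group"
begin

lemma quat_eqI: "q0 x = q0 y \<Longrightarrow> q1 x = q1 y \<Longrightarrow> q2 x = q2 y \<Longrightarrow> q3 x = q3 y \<Longrightarrow> x = y"
  by (cases x; cases y) auto

lemmas qdefs = qzero_def qone_def qof_rat_def qof_int_def qadd_def qneg_def qscale_def qmul_def qconj_def qnrd_def qtrd_def

lemma qmul_assoc: "qmul a b (qmul a b x y) z = qmul a b x (qmul a b y z)"
  by (rule quat_eqI) (simp_all add: qdefs algebra_simps)

lemma qmul_addL: "qmul a b (qadd x y) z = qadd (qmul a b x z) (qmul a b y z)"
  by (rule quat_eqI) (simp_all add: qdefs algebra_simps)
lemma qmul_addR: "qmul a b z (qadd x y) = qadd (qmul a b z x) (qmul a b z y)"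
  by (rule quat_eqI) (simp_all add: qdefs algebra_simps)
lemma qmul_negL: "qmul a b (qneg x) y = qneg (qmul a b x y)"
  by (rule quat_eqI) (simp_all add: qdefs algebra_simps)
lemma qmul_negR: "qmul a b x (qneg y) = qneg (qmul a b x y)"
  by (rule quat_eqI) (simp_all add: qdefs algebra_simps)
lemma qmul_scaleL: "qmul a b (qscale c x) y = qscale c (qmul a b x y)"
  by (rule quat_eqI) (simp_all add: qdefs algebra_simps)
lemma qmul_scaleR: "qmul a b x (qscale c y) = qscale c (qmul a b x y)"
  by (rule quat_eqI) (simp_all add: qdefs algebra_simps)
lemma qmul_ratL: "qmul a b (qof_rat c) y = qscale c y"
  by (rule quat_eqI) (simp_all add: qdefs algebra_simps)
lemma qmul_ratR: "qmul a b y (qof_rat c) = qscale c y"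
  by (rule quat_eqI) (simp_all add: qdefs algebra_simps)
lemma qconj_mul: "qconj (qmul a b x y) = qmul a b (qconj y) (qconj x)"
  by (rule quat_eqI) (simp_all add: qdefs algebra_simps)
lemma qconj_add: "qconj (qadd x y) = qadd (qconj x) (qconj y)"
  by (rule quat_eqI) (simp_all add: qdefs algebra_simps)
lemma qconj_conj: "qconj (qconj x) = x"
  by (rule quat_eqI) (simp_all add: qdefs algebra_simps)
lemma qconj_alt: "qconj x = qadd (qof_rat (qtrd x)) (qneg x)"
  by (rule quat_eqI) (simp_all add: qdefs algebra_simps)
lemma qmul_conjR: "qmul a b x (qconj x) = qof_rat (qnrd a b x)"
  by (rule quat_eqI) (simp_all add: qdefs algebra_simps power2_eq_square)
lemma qmul_conjL: "qmul a b (qconj x) x = qof_rat (qnrd a b x)"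
  by (rule quat_eqI) (simp_all add: qdefs algebra_simps power2_eq_square)
lemma qtrd_add: "qtrd (qadd x y) = qtrd x + qtrd y"
  by (simp add: qdefs)
lemma qtrd_mul_comm: "qtrd (qmul a b x y) = qtrd (qmul a b y x)"
  by (simp add: qdefs algebra_simps)
lemma sandwich: "qmul a b u (qmul a b X u) = qadd (qscale (qtrd (qmul a b u X)) u) (qneg (qscale (qnrd a b u) (qconj X)))"
  by (rule quat_eqI) (simp_all add: qdefs algebra_simps power2_eq_square)
lemma anticomm: "qadd (qmul a b x y) (qmul a b y x) = qadd (qadd (qscale (qtrd x) y) (qscale (qtrd y) x)) (qof_rat (qtrd (qmul a b x y) - qtrd x * qtrd y))"
  by (rule quat_eqI) (simp_all add: qdefs algebra_simps)

lemma four_neq: "(1::4) \<noteq> 2" "(1::4) \<noteq> 3" "(1::4) \<noteq> 4" "(2::4) \<noteq> 3" "(2::4) \<noteq> 4" "(3::4) \<noteq> 4"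
  by simp_all

lemma sum4: "(\<Sum>k<4. f k) = f 0 + f 1 + f (2::nat) + f 3"
  by (simp add: eval_nat_numeral)

definition idx :: "4 \<Rightarrow> nat" where
  "idx i = (if i = 1 then 0 else if i = 2 then 1 else if i = 3 then 2 else 3)"
definition jdx :: "nat \<Rightarrow> 4" where
  "jdx k = (if k = 0 then 1 else if k = 1 then 2 else if k = 2 then 3 else 4)"
definition qc :: "quat \<Rightarrow> 4 \<Rightarrow> rat" where
  "qc x i = (if i = 1 then q0 x else if i = 2 then q1 x else if i = 3 then q2 x else q3 x)"

lemma idx_simps[simp]: "idx 1 = 0" "idx 2 = 1" "idx 3 = 2" "idx 4 = 3"
  by (simp_all add: idx_def)
lemma qc_simps[simp]: "qc x 1 = q0 x" "qc x 2 = q1 x" "qc x 3 = q2 x" "qc x 4 = q3 x"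
  by (simp_all add: qc_def)

lemma jdx_idx: "jdx (idx j) = j"
  using exhaust_4[of j] by (auto simp: jdx_def)

definition Smat :: "(nat \<Rightarrow> quat) \<Rightarrow> rat^4^4" where
  "Smat e = (\<chi> i j. qc (e (idx j)) i)"

lemma lc_coord: "qc (lin_comb c e) i = (Smat e *v (\<chi> j. c (idx j)))$i"
proof -
  have "\<forall>i. qc (lin_comb c e) i = (Smat e *v (\<chi> j. c (idx j)))$i"
    unfolding forall_4 matrix_vector_mult_def Smat_def
    by (simp add: sum_4 lin_comb_def sum4 algebra_simps)
  then show ?thesis by blast
qed

lemma qc_eq: assumes "\<And>i. qc x i = qc y i" shows "x = y"
  using assms[of 1] assms[of 2] assms[of 3] assms[of 4] by (intro quat_eqI) simp_all

lemma Smat_inj: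
  assumes "q_indep e" "Smat e *v v = 0" shows "v = 0"
proof -
  let ?c = "\<lambda>k. v $ jdx k"
  have cv: "(\<chi> j. ?c (idx j)) = v" by (simp add: jdx_idx)
  have "lin_comb ?c e = qzero"
  proof (rule qc_eq)
    fix i show "qc (lin_comb ?c e) i = qc qzero i"
      unfolding lc_coord cv assms(2) using exhaust_4[of i] by (auto simp: qzero_def)
  qed
  then have z: "\<forall>k<4. ?c k = 0" using assms(1) unfolding q_indep_def by blast
  show ?thesis
  proof (rule iffD2[OF vec_eq_iff], rule allI)
    fix j :: 4
    have "idx j < 4" by (simp add: idx_def)
    then show "v $ j = 0 $ j" using z jdx_idx[of j] by auto
  qed
qed

lemma Smat_inv:
  assumes "q_indep e" obtains S' where "S' ** Smat e = mat 1" "Smat e ** S' = mat 1"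
proof -
  have "\<exists>B. B ** Smat e = mat 1"
    unfolding matrix_left_invertible_ker using Smat_inj[OF assms] by blast
  then obtain B where "B ** Smat e = mat 1" by blast
  then show ?thesis using that matrix_left_right_inverse by blast
qed

definition qstd :: "4 \<Rightarrow> quat" where
  "qstd k = Quat (if k = 1 then 1 else 0) (if k = 2 then 1 else 0) (if k = 3 then 1 else 0) (if k = 4 then 1 else 0)"

definition Tmat :: "rat \<Rightarrow> rat \<Rightarrow> quat \<Rightarrow> rat^4^4" where
  "Tmat a b y = (\<chi> i k. qc (qmul a b y (qmul a b (qstd k) y)) i)"

lemma Tmat_lin: "qc (qmul a b y (qmul a b x y)) i = (Tmat a b y *v (\<chi> k. qc x k))$i"
proof -
  have "\<forall>i. qc (qmul a b y (qmul a b x y)) i = (Tmat a b y *v (\<chi> k. qc x k))$i"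
    unfolding forall_4 matrix_vector_mult_def Tmat_def
    by (simp add: sum_4 qmul_def qstd_def algebra_simps)
  then show ?thesis by blast
qed

lemma Tmat_trace: "trace (Tmat a b y) = (qtrd y)^2"
  unfolding trace_def Tmat_def
  by (simp add: sum_4 qmul_def qstd_def qtrd_def algebra_simps power2_eq_square)

lemma rat_sq_int: fixes t :: rat assumes "t^2 \<in> \<int>" shows "t \<in> \<int>"
proof -
  obtain n d where q: "quotient_of t = (n, d)" by (cases "quotient_of t")
  have t: "t = of_int n / of_int d" using quotient_of_div[OF q] .
  have d: "d > 0" using quotient_of_denom_pos[OF q] .
  have cop: "coprime n d" using quotient_of_coprime[OF q] .
  obtain k where k: "t^2 = of_int k" using assms Ints_cases by blast
  have "(of_int n)^2 = (of_int k * (of_int d)^2 :: rat)"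
    using k d unfolding t by (simp add: field_simps power2_eq_square)
  then have "n^2 = k * d^2" by (metis of_int_eq_iff of_int_mult of_int_power)
  then have "d dvd n^2" by simp
  moreover have "coprime d (n^2)" using cop by (simp add: coprime_commute)
  ultimately have "is_unit d" by (meson coprime_common_divisor dvd_refl)
  then have "d = 1" using d by simp
  then show ?thesis using t by simp
qed

lemma lin_comb_unit: "k < 4 \<Longrightarrow> lin_comb (\<lambda>i. of_int (if i = k then 1 else 0)) e = e k"
  by (rule quat_eqI) (auto simp: lin_comb_def sum4 eval_nat_numeral less_Suc_eq)

lemma zspan_I: "lin_comb (\<lambda>k. of_int (n k)) e \<in> zspan e"
  unfolding zspan_def by blast

lemma basis_in: assumes "lattice_basis \<O> e" "k < 4" shows "e k \<in> \<O>"
proof -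
  have "e k = lin_comb (\<lambda>i. of_int ((\<lambda>i. if i = k then 1 else 0) i)) e"
    using lin_comb_unit[OF assms(2)] by simp
  moreover have "lin_comb (\<lambda>i. of_int ((\<lambda>i. if i = k then 1 else 0) i)) e \<in> zspan e"
    by (rule zspan_I)
  ultimately show ?thesis using assms(1) unfolding lattice_basis_def by simp
qed

lemma trd_sq_int:
  assumes lb: "lattice_basis \<O> e" and cl: "\<forall>x\<in>\<O>. \<forall>y\<in>\<O>. qmul a b x y \<in> \<O>" and y: "y \<in> \<O>"
  shows "qtrd y \<in> \<int>"
proof -
  have ind: "q_indep e" and Oe: "\<O> = zspan e" using lb unfolding lattice_basis_def by auto
  obtain S' where S1: "S' ** Smat e = mat 1" and S2: "Smat e ** S' = mat 1"
    using Smat_inv[OF ind] by blast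
  define S where "S = Smat e"
  define A where "A = Tmat a b y"
  have ex: "\<exists>n::nat\<Rightarrow>int. qmul a b y (qmul a b (e (idx j)) y) = lin_comb (\<lambda>k. of_int (n k)) e" for j
  proof -
    have "idx j < 4" by (simp add: idx_def)
    then have "e (idx j) \<in> \<O>" using basis_in[OF lb] by blast
    then have "qmul a b y (qmul a b (e (idx j)) y) \<in> \<O>" using cl y by blast
    then show ?thesis unfolding Oe zspan_def by auto
  qed
  define nn where "nn j = (SOME n::nat\<Rightarrow>int. qmul a b y (qmul a b (e (idx j)) y) = lin_comb (\<lambda>k. of_int (n k)) e)" for j
  have nn: "qmul a b y (qmul a b (e (idx j)) y) = lin_comb (\<lambda>k. of_int (nn j k)) e" for j
    unfolding nn_def by (rule someI_ex[OF ex])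
  define M :: "rat^4^4" where "M = (\<chi> k j. of_int (nn j (idx k)))"
  have AS: "A ** S = S ** M"
  proof -
    have "(A ** S)$i$j = (S ** M)$i$j" for i j
    proof -
      have col: "(\<chi> k. qc (e (idx j)) k) = (\<chi> k. S$k$j)" by (simp add: S_def Smat_def)
      have "(A ** S)$i$j = (A *v (\<chi> k. S$k$j))$i"
        by (simp add: matrix_matrix_mult_def matrix_vector_mult_def)
      also have "\<dots> = qc (qmul a b y (qmul a b (e (idx j)) y)) i"
        unfolding A_def Tmat_lin col ..
      also have "\<dots> = (S *v (\<chi> k. of_int (nn j (idx k))))$i"
        unfolding nn lc_coord S_def ..
      also have "\<dots> = (S ** M)$i$j"
        by (simp add: matrix_matrix_mult_def matrix_vector_mult_def M_def)
      finally show ?thesis .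
    qed
    then show ?thesis by (simp add: vec_eq_iff)
  qed
  have "trace M = trace (S' ** (S ** M))"
    using S1 by (simp add: S_def matrix_mul_assoc)
  also have "\<dots> = trace (S' ** (A ** S))" by (simp add: AS)
  also have "\<dots> = trace ((A ** S) ** S')" by (rule trace_mul_sym)
  also have "\<dots> = trace A" using S2 by (simp add: S_def matrix_mul_assoc[symmetric])
  finally have "trace A = trace M" by simp
  moreover have "trace M \<in> \<int>" unfolding trace_def M_def by (simp add: sum_4)
  ultimately have "(qtrd y)^2 \<in> \<int>" unfolding A_def Tmat_trace by simp
  then show ?thesis by (rule rat_sq_int)
qed

lemma lc_cong: "(\<And>k. k < 4 \<Longrightarrow> c k = d k) \<Longrightarrow> lin_comb c e = lin_comb d e"
  by (simp add: lin_comb_def sum4)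
lemma lc_add: "lin_comb (\<lambda>k. c k + d k) e = qadd (lin_comb c e) (lin_comb d e)"
  by (rule quat_eqI) (simp_all add: lin_comb_def qadd_def sum4 algebra_simps)
lemma lc_scale: "lin_comb (\<lambda>k. s * c k) e = qscale s (lin_comb c e)"
  by (rule quat_eqI) (simp_all add: lin_comb_def qscale_def sum4 algebra_simps)
lemma lc_neg: "lin_comb (\<lambda>k. - c k) e = qneg (lin_comb c e)"
  by (rule quat_eqI) (simp_all add: lin_comb_def qneg_def sum4 algebra_simps)
lemma lc_zero: "lin_comb (\<lambda>k. 0) e = qzero"
  by (rule quat_eqI) (simp_all add: lin_comb_def qzero_def)
lemma lc_unique:
  assumes "q_indep e" "lin_comb c e = lin_comb d e" "k < 4" shows "c k = d k"
proof -
  have "lin_comb (\<lambda>k. c k + - d k) e = qzero"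
    unfolding lc_add lc_neg assms(2) by (rule quat_eqI) (simp_all add: qadd_def qneg_def qzero_def)
  then have "c k + - d k = 0" using assms(1,3) unfolding q_indep_def by blast
  then show ?thesis by simp
qed

lemma qscale_scale: "qscale c (qscale d x) = qscale (c * d) x"
  by (simp add: qscale_def)
lemma qscale_add: "qscale c (qadd x y) = qadd (qscale c x) (qscale c y)"
  by (simp add: qscale_def qadd_def algebra_simps)
lemma qscale_neg: "qscale c (qneg x) = qneg (qscale c x)"
  by (simp add: qscale_def qneg_def)
lemma qscale_inj: "c \<noteq> 0 \<Longrightarrow> qscale c x = qscale c y \<Longrightarrow> x = y"
  by (rule quat_eqI) (auto simp: qscale_def)
lemma qscale_one: "qscale 1 x = x" by (simp add: qscale_def)
lemma qadd_assoc: "qadd (qadd x y) z = qadd x (qadd y z)" by (simp add: qadd_def algebra_simps)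
lemma qadd_comm: "qadd x y = qadd y x" by (simp add: qadd_def algebra_simps)
lemma qadd_left_comm: "qadd x (qadd y z) = qadd y (qadd x z)" by (simp add: qadd_def algebra_simps)
lemma qadd_zero: "qadd x qzero = x" "qadd qzero x = x" by (simp_all add: qadd_def qzero_def)
lemma qadd_neg: "qadd x (qneg x) = qzero" by (simp add: qadd_def qneg_def qzero_def)
lemma qneg_add: "qneg (qadd x y) = qadd (qneg x) (qneg y)" by (simp add: qadd_def qneg_def)
lemma qneg_neg: "qneg (qneg x) = x" by (simp add: qneg_def)
lemma qof_int_rat: "qof_int k = qof_rat (of_int k)" by (simp add: qof_int_def)
lemma qof_rat_scale: "qof_rat c = qscale c qone" by (simp add: qof_rat_def qscale_def qone_def)
lemma qmul_one: "qmul a b qone x = x" "qmul a b x qone = x"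
  by (rule quat_eqI, simp_all add: qmul_def qone_def)+

locale qsetup =
  fixes a b :: rat and \<O> :: "quat set" and P :: "quat set" and e :: "nat \<Rightarrow> quat"
    and p :: nat and red :: "quat \<Rightarrow> 'f::field"
  assumes lb: "lattice_basis \<O> e"
    and one_in: "qone \<in> \<O>"
    and mul_in: "\<forall>x\<in>\<O>. \<forall>y\<in>\<O>. qmul a b x y \<in> \<O>"
    and tsi: "two_sided_ideal a b \<O> P"
    and pP: "qof_int (int p) \<in> P"
    and prime_p: "prime p"
    and cardF: "CARD('f) = p^2"
    and rm: "reduction_map a b \<O> P red"
begin

lemma indep: "q_indep e" and \<O>e: "\<O> = zspan e" using lb unfolding lattice_basis_def by auto

lemma O_elim: assumes "x \<in> \<O>" obtains n where "x = lin_comb (\<lambda>k. of_int (n k)) e"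
  using assms unfolding \<O>e zspan_def by blast

lemma O_I: "lin_comb (\<lambda>k. of_int (n k)) e \<in> \<O>"
  unfolding \<O>e by (rule zspan_I)

lemma O_add: assumes "x \<in> \<O>" "y \<in> \<O>" shows "qadd x y \<in> \<O>"
proof -
  obtain n m where "x = lin_comb (\<lambda>k. of_int (n k)) e" "y = lin_comb (\<lambda>k. of_int (m k)) e"
    using assms O_elim by metis
  then have "qadd x y = lin_comb (\<lambda>k. of_int (n k + m k)) e" by (simp add: lc_add)
  then show ?thesis by (metis O_I)
qed

lemma O_scale: assumes "x \<in> \<O>" shows "qscale (of_int c) x \<in> \<O>"
proof -
  obtain n where "x = lin_comb (\<lambda>k. of_int (n k)) e" using assms O_elim by metis
  then have "qscale (of_int c) x = lin_comb (\<lambda>k. of_int (c * n k)) e" by (simp add: lc_scale)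
  then show ?thesis by (metis O_I)
qed

lemma O_neg: assumes "x \<in> \<O>" shows "qneg x \<in> \<O>"
proof -
  have "qneg x = qscale (of_int (-1)) x" by (simp add: qneg_def qscale_def)
  then show ?thesis by (metis O_scale[OF assms])
qed

lemma O_zero: "qzero \<in> \<O>" using O_I[of "\<lambda>k. 0"] by (simp add: lc_zero)

lemma O_mul: "x \<in> \<O> \<Longrightarrow> y \<in> \<O> \<Longrightarrow> qmul a b x y \<in> \<O>" using mul_in by blast

lemma O_ofint: "qof_int k \<in> \<O>"
proof -
  have "qof_int k = qscale (of_int k) qone" by (simp add: qof_int_def qof_rat_scale)
  then show ?thesis using O_scale[OF one_in] by simp
qed

definition pO :: "int \<Rightarrow> quat set" where "pO q = (\<lambda>z. qscale (of_int q) z) ` \<O>"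

lemma pO_div:
  assumes "x \<in> \<O>" "qscale (of_int N) x \<in> pO q" "coprime N q"
  shows "x \<in> pO q"
proof -
  obtain y where y: "y \<in> \<O>" "qscale (of_int N) x = qscale (of_int q) y"
    using assms(2) unfolding pO_def by blast
  obtain n where n: "x = lin_comb (\<lambda>k. of_int (n k)) e" using assms(1) O_elim by metis
  obtain m where m: "y = lin_comb (\<lambda>k. of_int (m k)) e" using y(1) O_elim by metis
  have "lin_comb (\<lambda>k. of_int (N * n k)) e = lin_comb (\<lambda>k. of_int (q * m k)) e"
    using y(2) unfolding n m by (simp add: lc_scale[symmetric])
  then have eq: "N * n k = q * m k" if "k < 4" for k
    using lc_unique[OF indep _ that] by (metis of_int_eq_iff)
  have dv: "q dvd n k" if "k < 4" for k
  proof -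
    have "q dvd N * n k" using eq[OF that] by simp
    then show ?thesis using assms(3) by (metis coprime_commute coprime_dvd_mult_right_iff)
  qed
  have "x = qscale (of_int q) (lin_comb (\<lambda>k. of_int (n k div q)) e)"
    unfolding n lc_scale[symmetric]
    by (rule lc_cong) (use dv in \<open>simp flip: of_int_mult\<close>)
  then show ?thesis unfolding pO_def by (metis O_I image_eqI)
qed

lemma pO_sub: "pO q \<subseteq> \<O>"
  unfolding pO_def using O_scale by blast

lemma pO_add: "x \<in> pO q \<Longrightarrow> y \<in> pO q \<Longrightarrow> qadd x y \<in> pO q"
  unfolding pO_def using O_add by (auto simp: qscale_add[symmetric])

lemma pO_neg: "x \<in> pO q \<Longrightarrow> qneg x \<in> pO q"
  unfolding pO_def using O_neg by (auto simp: qscale_neg[symmetric])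

lemma pO_mulL: "x \<in> \<O> \<Longrightarrow> y \<in> pO q \<Longrightarrow> qmul a b x y \<in> pO q"
  unfolding pO_def using O_mul by (auto simp: qmul_scaleR)

lemma pO_mulR: "x \<in> pO q \<Longrightarrow> y \<in> \<O> \<Longrightarrow> qmul a b x y \<in> pO q"
  unfolding pO_def using O_mul by (auto simp: qmul_scaleL)

lemma pO_scale: "x \<in> \<O> \<Longrightarrow> qscale (of_int q) x \<in> pO q"
  unfolding pO_def by blast

lemma pO_zero_lemma:
  assumes "x \<in> \<O>" "\<And>k. x \<in> pO (int p ^ k)" shows "x = qzero"
proof -
  obtain n where n: "x = lin_comb (\<lambda>k. of_int (n k)) e" using assms(1) O_elim by metis
  have dv: "int p ^ j dvd n k" if "k < 4" for j k
  proof -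
    obtain y where y: "y \<in> \<O>" "x = qscale (of_int (int p ^ j)) y" using assms(2)[of j] unfolding pO_def by blast
    obtain m where m: "y = lin_comb (\<lambda>k. of_int (m k)) e" using y(1) O_elim by metis
    have "lin_comb (\<lambda>k. of_int (n k)) e = lin_comb (\<lambda>k. of_int (int p ^ j * m k)) e"
      using y(2) unfolding n m by (simp add: lc_scale[symmetric])
    then have "n k = int p ^ j * m k" using lc_unique[OF indep _ that] by (metis of_int_eq_iff)
    then show ?thesis by simp
  qed
  have p2: "int p \<ge> 2" using prime_p prime_ge_2_nat by auto
  have z: "n k = 0" if "k < 4" for k
  proof (rule ccontr)
    assume nz: "n k \<noteq> 0"
    let ?j = "nat \<bar>n k\<bar>"
    have "int p ^ ?j dvd n k" using dv[OF that] .
    then have "\<bar>int p ^ ?j\<bar> \<le> \<bar>n k\<bar>" using nz dvd_imp_le_int by blast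
    then have "int p ^ ?j \<le> \<bar>n k\<bar>" by simp
    moreover have "int ?j < 2 ^ ?j" by (rule of_nat_less_two_power)
    moreover have "(2::int) ^ ?j \<le> int p ^ ?j" using p2 by (simp add: power_mono)
    ultimately show False by simp
  qed
  show ?thesis unfolding n using z by (simp add: lc_cong[of _ "\<lambda>k. 0"] lc_zero)
qed

end

context qsetup begin

lemma P_sub: "P \<subseteq> \<O>" and P_zero: "qzero \<in> P"
  and P_add: "x \<in> P \<Longrightarrow> y \<in> P \<Longrightarrow> qadd x y \<in> P"
  and P_neg: "x \<in> P \<Longrightarrow> qneg x \<in> P"
  and P_mulL: "x \<in> \<O> \<Longrightarrow> y \<in> P \<Longrightarrow> qmul a b x y \<in> P"
  and P_mulR: "x \<in> \<O> \<Longrightarrow> y \<in> P \<Longrightarrow> qmul a b y x \<in> P"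
  using tsi unfolding two_sided_ideal_def by auto

lemma P_O: "x \<in> P \<Longrightarrow> x \<in> \<O>" using P_sub by blast

lemma red_one: "red qone = 1"
  and red_add: "x \<in> \<O> \<Longrightarrow> y \<in> \<O> \<Longrightarrow> red (qadd x y) = red x + red y"
  and red_mul: "x \<in> \<O> \<Longrightarrow> y \<in> \<O> \<Longrightarrow> red (qmul a b x y) = red x * red y"
  and red_surj: "red ` \<O> = UNIV"
  and P_ker: "P = {x \<in> \<O>. red x = 0}"
  using rm unfolding reduction_map_def by auto

lemma ker: "x \<in> \<O> \<Longrightarrow> red x = 0 \<longleftrightarrow> x \<in> P"
  using P_ker by blast

lemma red_zero: "red qzero = 0"
proof -
  have "red qzero + red qzero = red qzero + 0" using red_add[OF O_zero O_zero] by (simp add: qadd_zero)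
  then show ?thesis by (rule add_left_imp_eq)
qed

lemma red_neg: "x \<in> \<O> \<Longrightarrow> red (qneg x) = - red x"
proof -
  assume x: "x \<in> \<O>"
  have "red x + red (qneg x) = 0" using red_add[OF x O_neg[OF x]] by (simp add: qadd_neg red_zero)
  then show ?thesis by (metis add.commute add_eq_0_iff2 add_right_cancel)
qed

lemma red_sub: "x \<in> \<O> \<Longrightarrow> y \<in> \<O> \<Longrightarrow> red (qadd x (qneg y)) = red x - red y"
  using red_add[of x "qneg y"] O_neg[of y] red_neg[of y] by simp

lemma red_ofint: "red (qof_int k) = of_int k"
proof (induction k rule: int_induct[where k = 0])
  case base then show ?case using red_zero by (simp add: qof_int_def qof_rat_def qzero_def)
next
  case (step1 i)
  have "qof_int (i + 1) = qadd (qof_int i) qone" by (simp add: qof_int_def qof_rat_def qadd_def qone_def)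
  then show ?case using step1 red_add[OF O_ofint one_in] red_one by simp
next
  case (step2 i)
  have "qof_int (i - 1) = qadd (qof_int i) (qneg qone)" by (simp add: qof_int_def qof_rat_def qadd_def qone_def qneg_def)
  then show ?case using step2 red_sub[OF O_ofint one_in] red_one by simp
qed

lemma qscale_ofint_mul: "qscale (of_int k) x = qmul a b (qof_int k) x"
  by (simp add: qof_int_def qmul_ratL)

lemma red_scale: "x \<in> \<O> \<Longrightarrow> red (qscale (of_int k) x) = of_int k * red x"
  by (simp add: qscale_ofint_mul red_mul O_ofint red_ofint)

lemma red_p: "(of_int (int p) :: 'f) = 0"
proof -
  have "red (qof_int (int p)) = 0" using ker[OF O_ofint] pP by blast
  then show ?thesis using red_ofint[of "int p"] by simp
qed

lemma prime_int: "prime (int p)" using prime_p by simp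

lemma inv_mod:
  assumes "\<not> int p dvd k" obtains u where "(of_int u :: 'f) * of_int k = 1"
proof -
  have "coprime (int p) k" using prime_imp_coprime[OF prime_int assms] .
  then have "gcd k (int p) = 1" by (simp add: coprime_iff_gcd_eq_1 gcd.commute)
  then obtain u v where "u * k + v * int p = 1" using bezout_int[of k "int p"] by auto
  then have "(of_int (u * k + v * int p) :: 'f) = 1" by simp
  then have "(of_int u :: 'f) * of_int k = 1" using red_p by simp
  then show ?thesis using that by blast
qed

lemma char_p: "(of_int k :: 'f) = 0 \<longleftrightarrow> int p dvd k"
proof
  assume "(of_int k :: 'f) = 0"
  show "int p dvd k"
  proof (rule ccontr)
    assume "\<not> int p dvd k"
    then obtain u where "(of_int u :: 'f) * of_int k = 1" using inv_mod by blast
    then show False using \<open>(of_int k :: 'f) = 0\<close> by simp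
  qed
next
  assume "int p dvd k"
  then obtain m where "k = int p * m" by blast
  then show "(of_int k :: 'f) = 0" using red_p by simp
qed

definition ti :: "quat \<Rightarrow> int" where "ti x = \<lfloor>qtrd x\<rfloor>"

lemma ti: "x \<in> \<O> \<Longrightarrow> qtrd x = of_int (ti x)"
  unfolding ti_def using trd_sq_int[OF lb mul_in] by (metis Ints_cases floor_of_int)

lemma conj_eq: "x \<in> \<O> \<Longrightarrow> qconj x = qadd (qof_int (ti x)) (qneg x)"
  using qconj_alt[of x] ti[of x] by (simp add: qof_int_def)

lemma conj_in: "x \<in> \<O> \<Longrightarrow> qconj x \<in> \<O>"
  using conj_eq O_add O_ofint O_neg by metis

lemma red_conj: "x \<in> \<O> \<Longrightarrow> red (qconj x) = of_int (ti x) - red x"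
  using conj_eq red_sub O_ofint red_ofint by metis

lemma half_int: fixes c :: rat assumes "2 * c \<in> \<int>" "2 * c^2 \<in> \<int>" shows "c \<in> \<int>"
proof -
  obtain k where k: "2 * c = of_int k" using assms(1) Ints_cases by blast
  obtain m where m: "2 * c^2 = of_int m" using assms(2) Ints_cases by blast
  have "(of_int k)^2 = (2 * of_int m :: rat)" using k m by (metis mult.assoc power2_eq_square mult.commute mult.left_commute)
  then have "k^2 = 2 * m" by (metis of_int_eq_iff of_int_mult of_int_numeral of_int_power)
  then have "even (k^2)" by simp
  then have "even k" by simp
  then obtain j where "k = 2 * j" by blast
  then have "c = of_int j" using k by simp
  then show ?thesis by simp
qed

lemma nrd_int: assumes "x \<in> \<O>" shows "qnrd a b x \<in> \<int>"
proof -
  let ?c = "qnrd a b x"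
  have c: "qof_rat ?c \<in> \<O>" using qmul_conjR[of a b x] O_mul[OF assms conj_in[OF assms]] by simp
  have "qtrd (qof_rat ?c) \<in> \<int>" using ti[OF c] by simp
  then have 1: "2 * ?c \<in> \<int>" by (simp add: qtrd_def qof_rat_def)
  have "qmul a b (qof_rat ?c) (qof_rat ?c) = qof_rat (?c * ?c)" by (simp only: qmul_ratL) (simp add: qof_rat_def qscale_def)
  then have c2: "qof_rat (?c * ?c) \<in> \<O>" using O_mul[OF c c] by simp
  have "qtrd (qof_rat (?c * ?c)) \<in> \<int>" using ti[OF c2] by simp
  then have 2: "2 * ?c^2 \<in> \<int>" by (simp add: qtrd_def qof_rat_def power2_eq_square)
  show ?thesis using half_int[OF 1 2] .
qed

definition ni :: "quat \<Rightarrow> int" where "ni x = \<lfloor>qnrd a b x\<rfloor>"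

lemma ni: "x \<in> \<O> \<Longrightarrow> qnrd a b x = of_int (ni x)"
  unfolding ni_def using nrd_int by (metis Ints_cases floor_of_int)

lemma red_nrd: "x \<in> \<O> \<Longrightarrow> red x * red (qconj x) = of_int (ni x)"
  using red_mul[OF _ conj_in] qmul_conjR[of a b x] ni[of x] red_ofint[of "ni x"]
  by (metis qof_int_def)

end

lemma L1_identity: "qadd (qmul a b x y) (qneg (qmul a b y (qconj x))) =
   qadd (qscale (qtrd y) x) (qof_rat (qtrd (qmul a b x y) - qtrd x * qtrd y))"
  by (rule quat_eqI) (simp_all add: qdefs algebra_simps)

lemma P2_identity:
  "qmul a b (qmul a b y u) (qadd w (qneg (qconj w))) =
   qadd (qadd (qmul a b w (qmul a b y u)) (qneg (qmul a b (qmul a b y u) (qconj w))))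
    (qneg (qadd (qmul a b (qadd (qmul a b w y) (qneg (qmul a b y (qconj w)))) u)
                (qmul a b y (qadd (qmul a b (qconj w) u) (qneg (qmul a b u (qconj (qconj w))))))))"
  by (rule quat_eqI) (simp_all add: qdefs algebra_simps)

lemma conj_diff: "qconj (qadd w (qneg (qconj w))) = qneg (qadd w (qneg (qconj w)))"
  by (rule quat_eqI) (simp_all add: qdefs algebra_simps)

context qsetup begin

lemma finite_F: "finite (UNIV :: 'f set)"
proof -
  have "CARD('f) > 0" using cardF prime_gt_0_nat[OF prime_p] by simp
  then show ?thesis by (rule card_ge_0_finite)
qed

lemma of_int_mod: "(of_int k :: 'f) = of_int (k mod int p)"
proof -
  have "k = int p * (k div int p) + k mod int p" by simp
  then have "(of_int k :: 'f) = of_int (int p) * of_int (k div int p) + of_int (k mod int p)"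
    by (metis of_int_add of_int_mult)
  then show ?thesis using red_p by simp
qed

lemma gen_exists: "\<exists>v::'f. v \<notin> range of_int"
proof -
  have "range (of_int :: int \<Rightarrow> 'f) \<subseteq> (of_int :: int \<Rightarrow> 'f) ` {0..<int p}"
  proof
    fix v assume "v \<in> range (of_int :: int \<Rightarrow> 'f)"
    then obtain k where "v = of_int k" by blast
    moreover have "k mod int p \<in> {0..<int p}" using prime_p prime_gt_0_nat by simp
    ultimately show "v \<in> (of_int :: int \<Rightarrow> 'f) ` {0..<int p}" using of_int_mod by blast
  qed
  then have "card (range (of_int :: int \<Rightarrow> 'f)) \<le> card ((of_int :: int \<Rightarrow> 'f) ` {0..<int p})"
    by (intro card_mono) auto
  also have "\<dots> \<le> card {0..<int p}" by (rule card_image_le) simp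
  also have "\<dots> = p" by simp
  also have "p < p^2" using prime_ge_2_nat[OF prime_p] by (auto simp: power2_eq_square)
  finally have "card (range (of_int :: int \<Rightarrow> 'f)) < CARD('f)" using cardF by simp
  show ?thesis
  proof (rule ccontr)
    assume "\<not> (\<exists>v::'f. v \<notin> range of_int)"
    then have "range (of_int :: int \<Rightarrow> 'f) = UNIV" by blast
    then show False using \<open>card (range (of_int :: int \<Rightarrow> 'f)) < CARD('f)\<close> by simp
  qed
qed

lemma gen_O: obtains w where "w \<in> \<O>" "red w \<notin> range of_int"
proof -
  obtain v :: 'f where v: "v \<notin> range of_int" using gen_exists by blast
  have "v \<in> red ` \<O>" using red_surj by simp
  then obtain w where "w \<in> \<O>" "red w = v" by blast
  then show ?thesis using that v by blast
qed

lemma Fp_div: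
  assumes "(of_int k :: 'f) \<noteq> 0" "of_int k * v \<in> range (of_int :: int \<Rightarrow> 'f)"
  shows "v \<in> range (of_int :: int \<Rightarrow> 'f)"
proof -
  have "\<not> int p dvd k" using assms(1) char_p by simp
  then obtain u where u: "(of_int u :: 'f) * of_int k = 1" using inv_mod by blast
  obtain m where m: "of_int k * v = (of_int m :: 'f)" using assms(2) by auto
  have "v = of_int u * (of_int k * v)" using u by (metis mult.assoc mult_1)
  also have "\<dots> = of_int (u * m)" using m by simp
  finally show ?thesis by blast
qed

lemma trdP: assumes y: "y \<in> P" shows "int p dvd ti y"
proof -
  have yO: "y \<in> \<O>" using P_O[OF y] .
  have ry: "red y = 0" using ker[OF yO] y by simp
  let ?\<tau> = "(of_int (ti y) :: 'f)"
  obtain w where w: "w \<in> \<O>" "red w \<notin> range of_int" using gen_O by blast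
  have wy: "qmul a b w y \<in> P" using P_mulL[OF w(1) y] .
  have wyO: "qmul a b w y \<in> \<O>" using P_O[OF wy] .
  have "red (qconj (qmul a b w y)) = of_int (ti (qmul a b w y))"
    using red_conj[OF wyO] ker[OF wyO] wy by simp
  moreover have "red (qconj (qmul a b w y)) = ?\<tau> * (of_int (ti w) - red w)"
    unfolding qconj_mul using red_mul[OF conj_in[OF yO] conj_in[OF w(1)]] red_conj[OF yO] red_conj[OF w(1)] ry
    by simp
  ultimately have inF: "?\<tau> * (of_int (ti w) - red w) \<in> range of_int" by (metis rangeI)
  have "?\<tau> = 0"
  proof (rule ccontr)
    assume "?\<tau> \<noteq> 0"
    then have "of_int (ti w) - red w \<in> range of_int" using Fp_div inF by blast
    then obtain m where "of_int (ti w) - red w = (of_int m :: 'f)" by blast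
    then have "red w = of_int (ti w - m)" by (simp add: algebra_simps)
    then show False using w(2) by blast
  qed
  then show ?thesis using char_p by simp
qed

lemma conjP: assumes y: "y \<in> P" shows "qconj y \<in> P"
proof -
  have yO: "y \<in> \<O>" using P_O[OF y] .
  have "red (qconj y) = 0" using red_conj[OF yO] ker[OF yO] y trdP[OF y] char_p by simp
  then show ?thesis using ker[OF conj_in[OF yO]] by simp
qed

lemma L1: assumes y: "y \<in> P" and x: "x \<in> \<O>"
  shows "qadd (qmul a b x y) (qneg (qmul a b y (qconj x))) \<in> pO (int p)"
proof -
  have yO: "y \<in> \<O>" using P_O[OF y] .
  have xy: "qmul a b x y \<in> P" using P_mulL[OF x y] .
  obtain u where u: "ti y = int p * u" using trdP[OF y] by blast
  obtain v where v: "ti (qmul a b x y) = int p * v" using trdP[OF xy] by blast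
  have t1: "qtrd y = of_int (int p) * of_int u" using ti[OF yO] u by simp
  have t2: "qtrd (qmul a b x y) = of_int (int p) * of_int v" using ti[OF P_O[OF xy]] v by simp
  have t3: "qtrd x = of_int (ti x)" using ti[OF x] .
  have "qadd (qmul a b x y) (qneg (qmul a b y (qconj x))) =
        qscale (of_int (int p)) (qadd (qscale (of_int u) x) (qof_int (v - ti x * u)))"
    unfolding L1_identity t1 t2 t3
    by (rule quat_eqI) (simp_all add: qdefs algebra_simps)
  moreover have "qadd (qscale (of_int u) x) (qof_int (v - ti x * u)) \<in> \<O>"
    using O_add O_scale[OF x] O_ofint by blast
  ultimately show ?thesis by (metis pO_scale)
qed

lemma gen2: obtains w where "w \<in> \<O>" "red w \<noteq> red (qconj w)"
proof -
  obtain w where w: "w \<in> \<O>" "red w \<notin> range of_int" using gen_O by blast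
  have "red w \<noteq> red (qconj w)"
  proof
    assume eq: "red w = red (qconj w)"
    let ?u = "red w"
    have s: "?u + ?u = of_int (ti w)" using eq red_conj[OF w(1)] by (simp add: algebra_simps)
    have m: "?u * ?u = of_int (ni w)" using eq red_nrd[OF w(1)] by simp
    show False
    proof (cases "p = 2")
      case True
      have two: "(2::'f) = 0" using red_p True by simp
      have "(?u - of_int (ni w)) * (?u - of_int (ni w)) = ?u * ?u - 2 * ?u * of_int (ni w) + of_int (ni w * ni w)"
        by (simp add: algebra_simps)
      also have "\<dots> = of_int (ni w + ni w * ni w)" using m two by simp
      also have "\<dots> = 0"
      proof -
        have "int p dvd (ni w + ni w * ni w)" using True by simp
        then show ?thesis by (rule char_p[THEN iffD2])
      qed
      finally have "?u = of_int (ni w)" by simp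
      then show False using w(2) by blast
    next
      case False
      have "odd p"
      proof
        assume "even p"
        then have "2 dvd p" by simp
        then show False using prime_p False unfolding prime_nat_iff by auto
      qed
      then obtain h where h: "int p + 1 = 2 * h" by (metis even_add even_of_nat odd_one evenE)
      have "(of_int (h * ti w) :: 'f) = of_int h * (?u + ?u)" using s by simp
      also have "\<dots> = of_int (2 * h) * ?u" by (simp add: algebra_simps)
      also have "\<dots> = ?u" using h red_p by (metis add_0 mult_1 of_int_1 of_int_add ring_class.ring_distribs(2))
      finally show False using w(2) by (metis rangeI)
    qed
  qed
  then show ?thesis using that w(1) by blast
qed

lemma P2: assumes y: "y \<in> P" and u: "u \<in> P" shows "qmul a b y u \<in> pO (int p)"
proof -
  obtain w where w: "w \<in> \<O>" "red w \<noteq> red (qconj w)" using gen2 by blast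
  have yO: "y \<in> \<O>" and uO: "u \<in> \<O>" using P_O y u by auto
  have yu: "qmul a b y u \<in> P" using P_mulR[OF uO y] .
  let ?d = "qadd w (qneg (qconj w))"
  have dO: "?d \<in> \<O>" using O_add O_neg conj_in w(1) by blast
  have A1: "qadd (qmul a b w (qmul a b y u)) (qneg (qmul a b (qmul a b y u) (qconj w))) \<in> pO (int p)"
    using L1[OF yu w(1)] .
  have A2: "qmul a b (qadd (qmul a b w y) (qneg (qmul a b y (qconj w)))) u \<in> pO (int p)"
    using pO_mulR[OF L1[OF y w(1)] uO] .
  have A3: "qmul a b y (qadd (qmul a b (qconj w) u) (qneg (qmul a b u (qconj (qconj w))))) \<in> pO (int p)"
    using pO_mulL[OF yO L1[OF u conj_in[OF w(1)]]] .
  have yud: "qmul a b (qmul a b y u) ?d \<in> pO (int p)"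
    unfolding P2_identity using A1 A2 A3 pO_add pO_neg by blast
  have "qmul a b (qmul a b (qmul a b y u) ?d) (qconj ?d) = qscale (of_int (ni ?d)) (qmul a b y u)"
    unfolding qmul_assoc qmul_conjR ni[OF dO] qmul_ratR qmul_scaleR ..
  moreover have "qmul a b (qmul a b (qmul a b y u) ?d) (qconj ?d) \<in> pO (int p)"
    using pO_mulR[OF yud conj_in[OF dO]] .
  moreover have "coprime (ni ?d) (int p)"
  proof -
    have rd: "red ?d \<noteq> 0" using red_sub[OF w(1) conj_in[OF w(1)]] w(2) by simp
    have "red (qconj ?d) = - red ?d" unfolding conj_diff using red_neg[OF dO] .
    then have e: "(of_int (ni ?d) :: 'f) = - (red ?d * red ?d)" using red_nrd[OF dO] by simp
    have "(of_int (ni ?d) :: 'f) \<noteq> 0"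
    proof
      assume "(of_int (ni ?d) :: 'f) = 0"
      then have "red ?d * red ?d = 0" using e by simp
      then show False using rd by simp
    qed
    then have "\<not> int p dvd ni ?d" using char_p by simp
    then have "coprime (int p) (ni ?d)" using prime_imp_coprime[OF prime_int] by blast
    then show ?thesis using coprime_commute by blast
  qed
  ultimately show ?thesis using pO_div[OF P_O[OF yu]] by simp
qed

end

lemma sandwich2: "qmul a b (qconj u) (qmul a b X u) =
   qadd (qadd (qscale (qtrd u) (qmul a b X u)) (qneg (qscale (qtrd (qmul a b u X)) u))) (qscale (qnrd a b u) (qconj X))"
  by (rule quat_eqI) (simp_all add: qdefs algebra_simps power2_eq_square)

locale qsetupR = qsetup +
  fixes r :: quat and M :: int
  assumes r_in: "r \<in> P" and rr: "qmul a b r (qconj r) = qof_int (int p * M)" and M_unit: "\<not> int p dvd M"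
begin

definition D :: "quat \<Rightarrow> quat" where "D v = qscale (1 / of_int (int p)) (qmul a b (qconj r) v)"
definition lam where "lam v = red (D v)"

lemma p_nz: "(of_int (int p) :: rat) \<noteq> 0" using prime_gt_0_nat[OF prime_p] by simp

lemma D_eq: "qmul a b (qconj r) v = qscale (of_int (int p)) z \<Longrightarrow> D v = z"
  unfolding D_def using p_nz by (simp add: qscale_scale qscale_one)

lemma rO: "r \<in> \<O>" using P_O[OF r_in] .
lemma rcP: "qconj r \<in> P" using conjP[OF r_in] .

lemma D_in: assumes "v \<in> P" shows "D v \<in> \<O>"
proof -
  obtain z where "z \<in> \<O>" "qmul a b (qconj r) v = qscale (of_int (int p)) z"
    using P2[OF rcP assms] unfolding pO_def by blast
  then show ?thesis using D_eq by simp
qed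

lemma D_add: "D (qadd v w) = qadd (D v) (D w)"
  unfolding D_def by (simp add: qmul_addR qscale_add)

lemma D_mulR: "D (qmul a b v u) = qmul a b (D v) u"
  unfolding D_def by (simp add: qmul_assoc[symmetric] qmul_scaleL)

lemma lam_add: "v \<in> P \<Longrightarrow> w \<in> P \<Longrightarrow> lam (qadd v w) = lam v + lam w"
  unfolding lam_def D_add using D_in red_add by blast

lemma lam_mulR: "v \<in> P \<Longrightarrow> u \<in> \<O> \<Longrightarrow> lam (qmul a b v u) = lam v * red u"
  unfolding lam_def D_mulR using D_in red_mul by blast

lemma lam_pO: assumes "c \<in> \<O>" shows "lam (qscale (of_int (int p)) c) = 0"
proof -
  have "D (qscale (of_int (int p)) c) = qmul a b (qconj r) c" by (rule D_eq) (simp add: qmul_scaleR)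
  moreover have "qmul a b (qconj r) c \<in> P" using P_mulR[OF assms rcP] .
  ultimately show ?thesis unfolding lam_def using ker[OF P_O] by simp
qed

lemma nrd_r: "qnrd a b r = of_int (int p * M)"
proof -
  have "qof_rat (qnrd a b r) = qof_rat (of_int (int p * M))" using rr qmul_conjR[of a b r] by (simp add: qof_int_def)
  then show ?thesis by (simp add: qof_rat_def)
qed

lemma lam_r: "lam r = of_int M"
proof -
  have "D r = qof_int M"
    by (rule D_eq) (simp add: qmul_conjL nrd_r qof_int_def qof_rat_def qscale_def)
  then show ?thesis unfolding lam_def using red_ofint by simp
qed

lemma lam_xr: assumes x: "x \<in> \<O>" shows "lam (qmul a b (qconj x) r) = of_int M * red x"
proof -
  have xc: "qconj x \<in> \<O>" using conj_in[OF x] .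
  have rx: "qmul a b r (qconj x) \<in> P" using P_mulR[OF xc r_in] .
  obtain u1 where u1: "ti r = int p * u1" using trdP[OF r_in] by blast
  obtain u2 where u2: "ti (qmul a b r (qconj x)) = int p * u2" using trdP[OF rx] by blast
  have t1: "qtrd r = of_int (int p) * of_int u1" using ti[OF rO] u1 by simp
  have t2: "qtrd (qmul a b r (qconj x)) = of_int (int p) * of_int u2" using ti[OF P_O[OF rx]] u2 by simp
  let ?z = "qadd (qadd (qscale (of_int u1) (qmul a b (qconj x) r)) (qneg (qscale (of_int u2) r))) (qscale (of_int M) x)"
  have "D (qmul a b (qconj x) r) = ?z"
  proof (rule D_eq)
    show "qmul a b (qconj r) (qmul a b (qconj x) r) = qscale (of_int (int p)) ?z"
      unfolding sandwich2 t1 t2 nrd_r qconj_conj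
      by (rule quat_eqI) (simp_all add: qdefs algebra_simps)
  qed
  moreover have "qmul a b (qconj x) r \<in> P" using P_mulL[OF xc r_in] .
  moreover have "red ?z = of_int M * red x"
  proof -
    have xr: "qmul a b (qconj x) r \<in> P" using P_mulL[OF xc r_in] .
    have xrO: "qmul a b (qconj x) r \<in> \<O>" using P_O[OF xr] .
    have A: "red (qscale (of_int u1) (qmul a b (qconj x) r)) = 0"
      using red_scale[OF xrO] ker[OF xrO] xr by simp
    have B: "red (qneg (qscale (of_int u2) r)) = 0"
      using red_neg[OF O_scale[OF rO]] red_scale[OF rO] ker[OF rO] r_in by simp
    have C: "red (qscale (of_int M) x) = of_int M * red x" using red_scale[OF x] .
    show ?thesis
      using red_add[OF O_add[OF O_scale[OF xrO] O_neg[OF O_scale[OF rO]]] O_scale[OF x]]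
        red_add[OF O_scale[OF xrO] O_neg[OF O_scale[OF rO]]] A B C by simp
  qed
  ultimately show ?thesis unfolding lam_def by simp
qed


lemma pO_P: "c \<in> \<O> \<Longrightarrow> qscale (of_int (int p)) c \<in> P"
  using P_mulR[OF _ pP] qscale_ofint_mul by (metis (no_types) qmul_ratR qof_int_def)

lemma lam_neg: "v \<in> P \<Longrightarrow> lam (qneg v) = - lam v"
proof -
  assume v: "v \<in> P"
  have "D (qneg v) = qneg (D v)" unfolding D_def by (simp add: qmul_negR qscale_neg)
  then show ?thesis unfolding lam_def using red_neg[OF D_in[OF v]] by simp
qed

lemma lam_zr: assumes z: "z \<in> \<O>" shows "lam (qmul a b (qconj z) (qconj r)) = - (of_int M * red z)"
proof -
  have zc: "qconj z \<in> \<O>" using conj_in[OF z] .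
  obtain u1 where u1: "ti r = int p * u1" using trdP[OF r_in] by blast
  have "qmul a b (qconj z) (qconj r) = qadd (qscale (of_int (int p)) (qscale (of_int u1) (qconj z))) (qneg (qmul a b (qconj z) r))"
    unfolding conj_eq[OF rO] u1 qmul_addR qmul_negR qof_int_def qmul_ratR qscale_scale by simp
  moreover have "qscale (of_int (int p)) (qscale (of_int u1) (qconj z)) \<in> P" using pO_P O_scale zc by blast
  moreover have "qmul a b (qconj z) r \<in> P" using P_mulL[OF zc r_in] .
  ultimately show ?thesis using lam_add P_neg lam_neg lam_pO[OF O_scale[OF zc]] lam_xr[OF z] by simp
qed

lemma det_main:
  assumes x: "x \<in> \<O>" and y: "y \<in> \<O>" and z: "z \<in> \<O>" and w: "w \<in> \<O>"
    and E: "qadd (qmul a b (qadd (qmul a b (qconj x) (qof_int (int p * s))) (qmul a b (qconj z) (qconj r))) y)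
                 (qmul a b (qadd (qmul a b (qconj x) r) (qmul a b (qconj z) (qof_int (int p * t)))) w) = r"
  shows "red x * red w - red y * red z = 1"
proof -
  have xc: "qconj x \<in> \<O>" and zc: "qconj z \<in> \<O>" using conj_in x z by auto
  have T1: "qmul a b (qconj x) (qof_int (int p * s)) = qscale (of_int (int p)) (qscale (of_int s) (qconj x))"
    by (simp add: qof_int_def qmul_ratR qscale_scale)
  have T4: "qmul a b (qconj z) (qof_int (int p * t)) = qscale (of_int (int p)) (qscale (of_int t) (qconj z))"
    by (simp add: qof_int_def qmul_ratR qscale_scale)
  have P1: "qscale (of_int (int p)) (qscale (of_int s) (qconj x)) \<in> P" using pO_P O_scale xc by blast
  have P4: "qscale (of_int (int p)) (qscale (of_int t) (qconj z)) \<in> P" using pO_P O_scale zc by blast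
  have P2': "qmul a b (qconj z) (qconj r) \<in> P" using P_mulL[OF zc rcP] .
  have P3: "qmul a b (qconj x) r \<in> P" using P_mulL[OF xc r_in] .
  have l1: "lam (qscale (of_int (int p)) (qscale (of_int s) (qconj x))) = 0" using lam_pO O_scale xc by blast
  have l4: "lam (qscale (of_int (int p)) (qscale (of_int t) (qconj z))) = 0" using lam_pO O_scale zc by blast
  have S1: "qadd (qscale (of_int (int p)) (qscale (of_int s) (qconj x))) (qmul a b (qconj z) (qconj r)) \<in> P"
    using P_add P1 P2' by blast
  have S2: "qadd (qmul a b (qconj x) r) (qscale (of_int (int p)) (qscale (of_int t) (qconj z))) \<in> P"
    using P_add P3 P4 by blast
  have "lam r = lam (qmul a b (qadd (qscale (of_int (int p)) (qscale (of_int s) (qconj x))) (qmul a b (qconj z) (qconj r))) y)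
         + lam (qmul a b (qadd (qmul a b (qconj x) r) (qscale (of_int (int p)) (qscale (of_int t) (qconj z)))) w)"
    using E unfolding T1 T4 using lam_add P_mulR S1 S2 y w by metis
  also have "\<dots> = - (of_int M * red z) * red y + of_int M * red x * red w"
    using lam_mulR[OF S1 y] lam_mulR[OF S2 w] lam_add[OF P1 P2'] lam_add[OF P3 P4] l1 l4 lam_zr[OF z] lam_xr[OF x]
    by simp
  finally have "of_int M * (red x * red w - red y * red z) = of_int M * 1"
    using lam_r by (simp add: algebra_simps)
  moreover have "(of_int M :: 'a) \<noteq> 0" using M_unit char_p by simp
  ultimately show ?thesis by simp
qed

end

lemma qmat_eqI: "m11 A = m11 B \<Longrightarrow> m12 A = m12 B \<Longrightarrow> m21 A = m21 B \<Longrightarrow> m22 A = m22 B \<Longrightarrow> A = B"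
  by (cases A; cases B) auto

definition qmat_add :: "qmat \<Rightarrow> qmat \<Rightarrow> qmat" where
  "qmat_add A B = QMat (qadd (m11 A) (m11 B)) (qadd (m12 A) (m12 B)) (qadd (m21 A) (m21 B)) (qadd (m22 A) (m22 B))"
definition qmat_scale :: "rat \<Rightarrow> qmat \<Rightarrow> qmat" where
  "qmat_scale c A = QMat (qscale c (m11 A)) (qscale c (m12 A)) (qscale c (m21 A)) (qscale c (m22 A))"
primrec qmat_pow :: "rat \<Rightarrow> rat \<Rightarrow> qmat \<Rightarrow> nat \<Rightarrow> qmat" where
  "qmat_pow a b A 0 = qmat_one"
| "qmat_pow a b A (Suc n) = qmat_mul a b (qmat_pow a b A n) A"

lemmas qmdefs = qmat_add_def qmat_scale_def qmat_mul_def qmat_one_def qmat_neg_def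

lemma qmat_mul_assoc: "qmat_mul a b (qmat_mul a b A B) C = qmat_mul a b A (qmat_mul a b B C)"
  by (rule qmat_eqI) (simp_all add: qmat_mul_def qmul_addL qmul_addR qmul_assoc qadd_assoc qadd_left_comm)

lemma qmat_mul_addL: "qmat_mul a b (qmat_add A B) C = qmat_add (qmat_mul a b A C) (qmat_mul a b B C)"
  by (rule qmat_eqI) (simp_all add: qmdefs qmul_addL qmul_addR qadd_assoc qadd_left_comm qadd_comm)
lemma qmat_mul_addR: "qmat_mul a b C (qmat_add A B) = qmat_add (qmat_mul a b C A) (qmat_mul a b C B)"
  by (rule qmat_eqI) (simp_all add: qmdefs qmul_addL qmul_addR qadd_assoc qadd_left_comm qadd_comm)
lemma qmat_mul_scaleL: "qmat_mul a b (qmat_scale c A) B = qmat_scale c (qmat_mul a b A B)"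
  by (rule qmat_eqI) (simp_all add: qmdefs qmul_scaleL qscale_add)
lemma qmat_mul_scaleR: "qmat_mul a b A (qmat_scale c B) = qmat_scale c (qmat_mul a b A B)"
  by (rule qmat_eqI) (simp_all add: qmdefs qmul_scaleR qscale_add)
lemma qmul_zero: "qmul a b qzero x = qzero" "qmul a b x qzero = qzero"
  by (rule quat_eqI, simp_all add: qmul_def qzero_def)+

lemma qmat_mul_oneL: "qmat_mul a b qmat_one A = A"
  by (rule qmat_eqI) (simp_all add: qmdefs qmul_one qadd_zero qmul_zero)
lemma qmat_mul_oneR: "qmat_mul a b A qmat_one = A"
  by (rule qmat_eqI) (simp_all add: qmdefs qmul_one qadd_zero qmul_zero)
lemma qmat_mul_negL: "qmat_mul a b (qmat_neg A) B = qmat_neg (qmat_mul a b A B)"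
  by (rule qmat_eqI) (simp_all add: qmdefs qmul_negL qneg_add)
lemma qmat_mul_negR: "qmat_mul a b A (qmat_neg B) = qmat_neg (qmat_mul a b A B)"
  by (rule qmat_eqI) (simp_all add: qmdefs qmul_negR qneg_add)
lemma qmat_neg_neg: "qmat_neg (qmat_neg A) = A"
  by (rule qmat_eqI) (simp_all add: qmdefs qneg_neg)

lemma qmat_pow_neg: "qmat_pow a b (qmat_neg A) n = (if even n then qmat_pow a b A n else qmat_neg (qmat_pow a b A n))"
  by (induction n) (auto simp: qmat_mul_negL qmat_mul_negR qmat_neg_neg)

lemma step_identity:
  assumes "qmat_mul a b E E = qmat_scale q Y"
  shows "qmat_mul a b (qmat_add (qmat_add qmat_one (qmat_scale n E)) (qmat_scale q X)) (qmat_add qmat_one E)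
       = qmat_add (qmat_add qmat_one (qmat_scale (n + 1) E))
                  (qmat_scale q (qmat_add (qmat_add (qmat_scale n Y) X) (qmat_mul a b X E)))"
proof -
  have "qmat_mul a b (qmat_add (qmat_add qmat_one (qmat_scale n E)) (qmat_scale q X)) (qmat_add qmat_one E)
      = qmat_add (qmat_add (qmat_add qmat_one (qmat_scale n E)) (qmat_scale q X))
                 (qmat_add (qmat_add E (qmat_scale n (qmat_scale q Y))) (qmat_scale q (qmat_mul a b X E)))"
    unfolding qmat_mul_addL qmat_mul_addR qmat_mul_oneL qmat_mul_oneR qmat_mul_scaleL assms ..
  also have "\<dots> = qmat_add (qmat_add qmat_one (qmat_scale (n + 1) E))
                  (qmat_scale q (qmat_add (qmat_add (qmat_scale n Y) X) (qmat_mul a b X E)))"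
    by (rule qmat_eqI; simp add: qmat_add_def qmat_scale_def; rule quat_eqI; simp add: qadd_def qscale_def algebra_simps)
  finally show ?thesis .
qed


lemma quat_cancel: assumes "qadd (qadd x y) z = x" shows "y = qneg z"
proof (rule quat_eqI)
  show "q0 y = q0 (qneg z)" using arg_cong[OF assms, of q0] by (simp add: qadd_def qneg_def)
  show "q1 y = q1 (qneg z)" using arg_cong[OF assms, of q1] by (simp add: qadd_def qneg_def)
  show "q2 y = q2 (qneg z)" using arg_cong[OF assms, of q2] by (simp add: qadd_def qneg_def)
  show "q3 y = q3 (qneg z)" using arg_cong[OF assms, of q3] by (simp add: qadd_def qneg_def)
qed

lemma qmat_cancel: assumes "qmat_add (qmat_add A B) C = A" shows "B = qmat_neg C"
proof (rule qmat_eqI)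
  have h: "qmat_add (qmat_add A B) C = A" by (rule assms)
  show "m11 B = m11 (qmat_neg C)" using arg_cong[OF h, of m11] by (simp add: qmat_add_def qmat_neg_def quat_cancel)
  show "m12 B = m12 (qmat_neg C)" using arg_cong[OF h, of m12] by (simp add: qmat_add_def qmat_neg_def quat_cancel)
  show "m21 B = m21 (qmat_neg C)" using arg_cong[OF h, of m21] by (simp add: qmat_add_def qmat_neg_def quat_cancel)
  show "m22 B = m22 (qmat_neg C)" using arg_cong[OF h, of m22] by (simp add: qmat_add_def qmat_neg_def quat_cancel)
qed

definition qmat_zero :: qmat where "qmat_zero = QMat qzero qzero qzero qzero"

lemma pow0_identity: "qmat_one = qmat_add (qmat_add qmat_one (qmat_scale 0 E)) (qmat_scale q qmat_zero)"
  by (rule qmat_eqI; simp add: qmdefs qmat_zero_def; rule quat_eqI; simp add: qdefs)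

lemma one_plus_diff: "qmat_add qmat_one (qmat_add D (qmat_neg qmat_one)) = D"
  by (rule qmat_eqI; simp add: qmdefs; rule quat_eqI; simp add: qdefs)

context qsetup begin

lemma M2_add: "in_M2 \<O> A \<Longrightarrow> in_M2 \<O> B \<Longrightarrow> in_M2 \<O> (qmat_add A B)"
  unfolding in_M2_def qmat_add_def using O_add by simp
lemma M2_scale: "in_M2 \<O> A \<Longrightarrow> in_M2 \<O> (qmat_scale (of_int k) A)"
  unfolding in_M2_def qmat_scale_def using O_scale by simp
lemma M2_neg: "in_M2 \<O> A \<Longrightarrow> in_M2 \<O> (qmat_neg A)"
  unfolding in_M2_def qmat_neg_def using O_neg by simp
lemma M2_mul: "in_M2 \<O> A \<Longrightarrow> in_M2 \<O> (B) \<Longrightarrow> in_M2 \<O> (qmat_mul a b A B)"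
  unfolding in_M2_def qmat_mul_def using O_add O_mul by simp
lemma M2_zero: "in_M2 \<O> qmat_zero" unfolding in_M2_def qmat_zero_def using O_zero by simp
lemma M2_one: "in_M2 \<O> qmat_one" unfolding in_M2_def qmat_one_def using O_zero one_in by simp

lemma pO_M2_decomp: assumes "in_M2 (pO q) X" obtains Y where "in_M2 \<O> Y" "X = qmat_scale (of_int q) Y"
proof -
  from assms obtain y11 y12 y21 y22 where
    "y11 \<in> \<O>" "m11 X = qscale (of_int q) y11" "y12 \<in> \<O>" "m12 X = qscale (of_int q) y12"
    "y21 \<in> \<O>" "m21 X = qscale (of_int q) y21" "y22 \<in> \<O>" "m22 X = qscale (of_int q) y22"
    unfolding in_M2_def pO_def by blast
  then show ?thesis using that[of "QMat y11 y12 y21 y22"]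
    by (simp add: in_M2_def qmat_scale_def qmat_eqI)
qed

lemma val_step:
  assumes E: "in_M2 \<O> E" and EE: "in_M2 (pO q) (qmat_mul a b E E)"
    and pw: "qmat_pow a b (qmat_add qmat_one E) N = qmat_one"
  shows "in_M2 (pO q) (qmat_scale (of_nat N) E)"
proof -
  obtain Y where Y: "in_M2 \<O> Y" "qmat_mul a b E E = qmat_scale (of_int q) Y" using pO_M2_decomp[OF EE] by blast
  have claim: "\<exists>X. in_M2 \<O> X \<and> qmat_pow a b (qmat_add qmat_one E) n =
      qmat_add (qmat_add qmat_one (qmat_scale (of_nat n) E)) (qmat_scale (of_int q) X)" for n
  proof (induction n)
    case 0
    show ?case using M2_zero pow0_identity by auto
  next
    case (Suc n)
    then obtain X where X: "in_M2 \<O> X" "qmat_pow a b (qmat_add qmat_one E) n =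
      qmat_add (qmat_add qmat_one (qmat_scale (of_nat n) E)) (qmat_scale (of_int q) X)" by blast
    let ?X = "qmat_add (qmat_add (qmat_scale (of_nat n) Y) X) (qmat_mul a b X E)"
    have "in_M2 \<O> ?X" using M2_add M2_scale[of Y "int n"] M2_mul X(1) Y(1) E by simp
    moreover have "qmat_pow a b (qmat_add qmat_one E) (Suc n) =
      qmat_add (qmat_add qmat_one (qmat_scale (of_nat (Suc n)) E)) (qmat_scale (of_int q) ?X)"
      using step_identity[OF Y(2), of "of_nat n" X] X(2) by (simp add: add.commute)
    ultimately show ?case by blast
  qed
  then obtain X where X: "in_M2 \<O> X" "qmat_one = qmat_add (qmat_add qmat_one (qmat_scale (of_nat N) E)) (qmat_scale (of_int q) X)"
    using pw by metis
  have "qmat_scale (of_nat N) E = qmat_neg (qmat_scale (of_int q) X)" using qmat_cancel X(2)[symmetric] by blast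
  also have "\<dots> = qmat_scale (of_int q) (qmat_neg X)"
    by (rule qmat_eqI) (simp_all add: qmat_neg_def qmat_scale_def qscale_neg)
  finally show ?thesis using M2_neg[OF X(1)] unfolding in_M2_def qmat_scale_def pO_def by auto
qed

end


lemma one_plus_zero: "qmat_add qmat_one qmat_zero = qmat_one"
  by (rule qmat_eqI; simp add: qmdefs qmat_zero_def; rule quat_eqI; simp add: qdefs)

context qsetup begin

lemma pO_mul: assumes "x \<in> pO qa" "y \<in> pO qb" shows "qmul a b x y \<in> pO (qa * qb)"
proof -
  obtain x' y' where "x' \<in> \<O>" "x = qscale (of_int qa) x'" "y' \<in> \<O>" "y = qscale (of_int qb) y'"
    using assms unfolding pO_def by blast
  then show ?thesis unfolding pO_def using O_mul
    by (auto simp: qmul_scaleL qmul_scaleR qscale_scale mult.commute intro!: image_eqI)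
qed

lemma pO_mono: assumes "qa dvd qb" "x \<in> pO qb" shows "x \<in> pO qa"
proof -
  obtain k where k: "qb = qa * k" using assms(1) by blast
  obtain z where "z \<in> \<O>" "x = qscale (of_int qb) z" using assms(2) unfolding pO_def by blast
  then show ?thesis unfolding pO_def k using O_scale
    by (auto simp: qscale_scale intro!: image_eqI[where x = "qscale (of_int k) z"])
qed

lemma pO_one: assumes "x \<in> \<O>" shows "x \<in> pO 1"
proof -
  have "x = qscale (of_int 1) x" by (simp add: qscale_one)
  then show ?thesis unfolding pO_def using assms by blast
qed

lemma M2_pO_mul: assumes "in_M2 (pO qa) A" "in_M2 (pO qb) B" shows "in_M2 (pO (qa * qb)) (qmat_mul a b A B)"
  using assms unfolding in_M2_def qmat_mul_def using pO_mul pO_add by simp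

lemma M2_P_mul: assumes "in_M2 P A" "in_M2 P B" shows "in_M2 (pO (int p)) (qmat_mul a b A B)"
  using assms unfolding in_M2_def qmat_mul_def using P2 pO_add by simp

lemma lift:
  assumes E: "in_M2 \<O> E" and EE: "in_M2 (pO q) (qmat_mul a b E E)"
    and pw: "qmat_pow a b (qmat_add qmat_one E) N = qmat_one" and cop: "coprime (int N) q"
  shows "in_M2 (pO q) E"
proof -
  have h: "in_M2 (pO q) (qmat_scale (of_int (int N)) E)" using val_step[OF E EE pw] by simp
  show ?thesis using h E pO_div[OF _ _ cop] unfolding in_M2_def qmat_scale_def by simp
qed

lemma val_all:
  assumes E: "in_M2 P E" and pw: "qmat_pow a b (qmat_add qmat_one E) N = qmat_one"
    and cop: "coprime (int N) (int p)"
  shows "E = qmat_zero"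
proof -
  have EO: "in_M2 \<O> E" using E P_O unfolding in_M2_def by blast
  have lvl: "in_M2 (pO (int p ^ Suc k)) E" for k
  proof (induction k)
    case 0
    show ?case using lift[OF EO M2_P_mul[OF E E] pw] cop by simp
  next
    case (Suc k)
    have "in_M2 (pO (int p ^ Suc k * int p ^ Suc k)) (qmat_mul a b E E)" using M2_pO_mul[OF Suc Suc] .
    moreover have "int p ^ Suc (Suc k) dvd int p ^ Suc k * int p ^ Suc k"
      unfolding power_add[symmetric] by (rule le_imp_power_dvd) simp
    ultimately have "in_M2 (pO (int p ^ Suc (Suc k))) (qmat_mul a b E E)"
      unfolding in_M2_def using pO_mono by blast
    moreover have "coprime (int N) (int p ^ Suc (Suc k))" using cop by simp
    ultimately show ?case using lift[OF EO _ pw] by blast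
  qed
  have all: "x \<in> pO (int p ^ k)" if "x \<in> \<O>" "\<And>k. x \<in> pO (int p ^ Suc k)" for x k
    using that pO_one by (cases k) auto
  show ?thesis
    using EO lvl pO_zero_lemma all unfolding in_M2_def qmat_zero_def by (intro qmat_eqI) simp_all
qed

lemma red_kernel:
  assumes D: "in_M2 \<O> D" and r11: "red (m11 D) = 1" and r12: "red (m12 D) = 0"
    and r21: "red (m21 D) = 0" and r22: "red (m22 D) = 1"
    and pw: "qmat_pow a b D N = qmat_one" and cop: "coprime (int N) (int p)"
  shows "D = qmat_one"
proof -
  let ?E = "qmat_add D (qmat_neg qmat_one)"
  have EP: "in_M2 P ?E"
  proof -
    have nz: "qneg qzero = qzero" by (simp add: qneg_def qzero_def)
    have Dm: "m11 D \<in> \<O>" "m12 D \<in> \<O>" "m21 D \<in> \<O>" "m22 D \<in> \<O>" using D unfolding in_M2_def by auto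
    have "qadd (m11 D) (qneg qone) \<in> P" using ker[OF O_add[OF Dm(1) O_neg[OF one_in]]] red_sub[OF Dm(1) one_in] r11 red_one by simp
    moreover have "qadd (m22 D) (qneg qone) \<in> P" using ker[OF O_add[OF Dm(4) O_neg[OF one_in]]] red_sub[OF Dm(4) one_in] r22 red_one by simp
    moreover have "m12 D \<in> P" "m21 D \<in> P" using ker Dm r12 r21 by auto
    ultimately show ?thesis unfolding in_M2_def qmat_add_def qmat_neg_def qmat_one_def by (simp add: nz qadd_zero)
  qed
  have "qmat_pow a b (qmat_add qmat_one ?E) N = qmat_one" using pw one_plus_diff by simp
  then have "?E = qmat_zero" using val_all[OF EP] cop by blast
  then show ?thesis using one_plus_diff[of D] one_plus_zero by simp
qed

end

lemma two_ne_one: "(2::2) \<noteq> 1" by simp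

context qsetup begin

lemma red2_entries: "red2 red A $ 1 $ 1 = red (m11 A)" "red2 red A $ 1 $ 2 = red (m12 A)"
   "red2 red A $ 2 $ 1 = red (m21 A)" "red2 red A $ 2 $ 2 = red (m22 A)"
  by (simp_all add: red2_def qm_entry_def)

lemma red2_det: "det (red2 red A) = red (m11 A) * red (m22 A) - red (m12 A) * red (m21 A)"
  unfolding det_2 red2_entries ..

lemma red2_eq_mat: "red2 red A = mat c \<longleftrightarrow> red (m11 A) = c \<and> red (m12 A) = 0 \<and> red (m21 A) = 0 \<and> red (m22 A) = c"
  unfolding vec_eq_iff forall_2 by (simp add: red2_entries mat_def)

lemma red2_mul: assumes "in_M2 \<O> A" "in_M2 \<O> B"
  shows "red2 red (qmat_mul a b A B) = red2 red A ** red2 red B"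
  using assms unfolding vec_eq_iff forall_2 in_M2_def
  by (simp add: matrix_matrix_mult_def sum_2 red2_entries qmat_mul_def red_add red_mul O_mul)

lemma red2_one: "red2 red qmat_one = mat 1"
  unfolding red2_eq_mat qmat_one_def by (simp add: red_one red_zero)

end

lemma Gamma_pow:
  assumes sg: "qmat_subgroup a b \<Gamma> X" and fin: "finite \<Gamma>" and g: "\<gamma> \<in> \<Gamma>"
  shows "qmat_pow a b \<gamma> (card \<Gamma>) = qmat_one" "qmat_pow a b \<gamma> (card \<Gamma> * 2) = qmat_one"
proof -
  define G where "G = \<lparr>carrier = \<Gamma>, monoid.mult = qmat_mul a b, one = qmat_one\<rparr>"
  have cl: "\<And>x y. x \<in> \<Gamma> \<Longrightarrow> y \<in> \<Gamma> \<Longrightarrow> qmat_mul a b x y \<in> \<Gamma>" and one: "qmat_one \<in> \<Gamma>"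
    and inv: "\<And>x. x \<in> \<Gamma> \<Longrightarrow> \<exists>y\<in>\<Gamma>. qmat_mul a b y x = qmat_one"
    using sg unfolding qmat_subgroup_def by blast+
  have grp: "group G"
    by (rule groupI) (auto simp: G_def cl one qmat_mul_assoc qmat_mul_oneL inv)
  have pw: "\<gamma> [^]\<^bsub>G\<^esub> n = qmat_pow a b \<gamma> n" for n
    by (induction n) (simp_all add: G_def)
  have gc: "\<gamma> \<in> carrier G" using g by (simp add: G_def)
  have o: "order G = card \<Gamma>" by (simp add: order_def G_def)
  have 1: "\<gamma> [^]\<^bsub>G\<^esub> order G = \<one>\<^bsub>G\<^esub>" using group.pow_order_eq_1[OF grp gc] .
  then show "qmat_pow a b \<gamma> (card \<Gamma>) = qmat_one" using pw o by (simp add: G_def)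
  have "\<gamma> [^]\<^bsub>G\<^esub> (order G * 2) = (\<gamma> [^]\<^bsub>G\<^esub> order G) [^]\<^bsub>G\<^esub> (2::nat)"
    using monoid.nat_pow_pow[OF group.is_monoid[OF grp] gc] by simp
  also have "\<dots> = \<one>\<^bsub>G\<^esub>" using 1 monoid.nat_pow_one[OF group.is_monoid[OF grp]] by simp
  finally show "qmat_pow a b \<gamma> (card \<Gamma> * 2) = qmat_one" using pw o by (simp add: G_def)
qed

theorem proposition10p5:
  fixes a b :: rat and p :: nat and \<O> P :: "quat set" and red :: "quat \<Rightarrow> 'f::field"
    and H :: qmat and \<Gamma> :: "qmat set"
  assumes "prime p"
    and "definite_quat a b"
    and "quat_disc_is a b p"
    and "maximal_order a b \<O>"
    and "two_sided_prime_above a b \<O> p P"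
    and "CARD('f) = p ^ 2"
    and "reduction_map a b \<O> P red"
    and "H \<in> Lambda_np a b p P"
    and "qmat_subgroup a b \<Gamma> (Aut a b \<O> H)"
    and "coprime (card \<Gamma>) p"
  shows "(\<forall>\<alpha>\<in>\<Gamma>. det (red2 red \<alpha>) = 1)
       \<and> (\<forall>\<alpha>\<in>\<Gamma>. \<forall>\<beta>\<in>\<Gamma>. red2 red (qmat_mul a b \<alpha> \<beta>) = red2 red \<alpha> ** red2 red \<beta>)
       \<and> inj_on (red2 red) \<Gamma>
       \<and> (\<forall>\<alpha>\<in>\<Gamma>. \<forall>\<beta>\<in>\<Gamma>. (\<exists>c. c \<noteq> 0 \<and> red2 red \<alpha> = mat c ** red2 red \<beta>)
              \<longrightarrow> \<alpha> = \<beta> \<or> \<alpha> = qmat_neg \<beta>)"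
proof -
  note pr = assms(1)
  obtain e where lb: "lattice_basis \<O> e" and one: "qone \<in> \<O>" and mc: "\<forall>x\<in>\<O>. \<forall>y\<in>\<O>. qmul a b x y \<in> \<O>"
    using assms(4) unfolding maximal_order_def is_order_def by blast
  have tsi: "two_sided_ideal a b \<O> P" and pP: "qof_int (int p) \<in> P"
    using assms(5) unfolding two_sided_prime_above_def by auto
  obtain s t r where H: "H = QMat (qof_int (int p * s)) r (qconj r) (qof_int (int p * t))"
    and rP: "r \<in> P" and rr0: "qmul a b r (qconj r) = qof_int (int p ^ 2 * s * t - int p)"
    using assms(8) unfolding Lambda_np_def by blast
  define M where "M = int p * s * t - 1"
  have rr: "qmul a b r (qconj r) = qof_int (int p * M)"
    using rr0 by (simp add: M_def algebra_simps power2_eq_square)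
  have Mu: "\<not> int p dvd M"
  proof
    assume "int p dvd M"
    moreover have "int p dvd int p * s * t" by simp
    ultimately have "int p dvd int p * s * t - M" by (rule dvd_diff[rotated])
    moreover have "int p * s * t - M = 1" by (simp add: M_def)
    ultimately have "int p dvd 1" by simp
    then show False using pr by simp
  qed
  interpret R: qsetupR a b \<O> P e p red r M
    by (intro qsetupR.intro qsetup.intro qsetupR_axioms.intro lb one mc tsi pP pr assms(6) assms(7) rP rr Mu)
  have sg: "qmat_subgroup a b \<Gamma> (Aut a b \<O> H)" by (rule assms(9))
  have GA: "\<Gamma> \<subseteq> Aut a b \<O> H" and cl: "\<And>x y. x \<in> \<Gamma> \<Longrightarrow> y \<in> \<Gamma> \<Longrightarrow> qmat_mul a b x y \<in> \<Gamma>"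
    and inv: "\<And>x. x \<in> \<Gamma> \<Longrightarrow> \<exists>y\<in>\<Gamma>. qmat_mul a b x y = qmat_one \<and> qmat_mul a b y x = qmat_one"
    using sg unfolding qmat_subgroup_def by blast+
  have inM: "in_M2 \<O> x" if "x \<in> \<Gamma>" for x using GA that unfolding Aut_def GL2_def by blast
  have fin: "finite \<Gamma>"
  proof (rule ccontr)
    assume "infinite \<Gamma>"
    then have "card \<Gamma> = 0" by simp
    then show False using assms(10) pr by simp
  qed
  have copN: "coprime (int (card \<Gamma>)) (int p)" using assms(10) by simp
  have det1: "det (red2 red \<alpha>) = 1" if al: "\<alpha> \<in> \<Gamma>" for \<alpha>
  proof -
    obtain x y z w where \<alpha>: "\<alpha> = QMat x y z w" by (cases \<alpha>)
    have xyzw: "x \<in> \<O>" "y \<in> \<O>" "z \<in> \<O>" "w \<in> \<O>" using inM[OF al] unfolding \<alpha> in_M2_def by auto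
    have "qmat_mul a b (qmat_mul a b (qmat_dagger \<alpha>) H) \<alpha> = H" using GA al unfolding Aut_def by blast
    then have "m12 (qmat_mul a b (qmat_mul a b (qmat_dagger \<alpha>) H) \<alpha>) = r" unfolding H by simp
    then have E: "qadd (qmul a b (qadd (qmul a b (qconj x) (qof_int (int p * s))) (qmul a b (qconj z) (qconj r))) y)
                 (qmul a b (qadd (qmul a b (qconj x) r) (qmul a b (qconj z) (qof_int (int p * t)))) w) = r"
      unfolding \<alpha> H by (simp add: qmat_mul_def qmat_dagger_def)
    show ?thesis using R.det_main[OF xyzw E] unfolding R.red2_det \<alpha> by simp
  qed
  have mul: "red2 red (qmat_mul a b \<alpha> \<beta>) = red2 red \<alpha> ** red2 red \<beta>" if "\<alpha> \<in> \<Gamma>" "\<beta> \<in> \<Gamma>" for \<alpha> \<beta>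
    using R.red2_mul inM that by blast
  have scal: "\<gamma> = qmat_one \<or> \<gamma> = qmat_neg qmat_one" if g: "\<gamma> \<in> \<Gamma>" and gc: "red2 red \<gamma> = mat c" for \<gamma> c
  proof -
    have ent: "red (m11 \<gamma>) = c" "red (m12 \<gamma>) = 0" "red (m21 \<gamma>) = 0" "red (m22 \<gamma>) = c"
      using gc unfolding R.red2_eq_mat by auto
    have "c * c = 1" using det1[OF g] unfolding R.red2_det ent by simp
    then have "(c - 1) * (c + 1) = 0" by (simp add: algebra_simps)
    then have c: "c = 1 \<or> c = -1" by (simp add: eq_neg_iff_add_eq_0)
    show ?thesis
    proof (cases "c = 1")
      case True
      have "\<gamma> = qmat_one"
        using R.red_kernel[OF inM[OF g] _ ent(2,3) _ Gamma_pow(1)[OF sg fin g] copN] ent True by simp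
      then show ?thesis by simp
    next
      case False
      then have cm: "c = -1" using c by simp
      have p2: "p \<noteq> 2"
      proof
        assume "p = 2"
        then have "(2::'f) = 0" using R.red_p by simp
        then have "(-1::'f) = 1" by (metis add_eq_0_iff_both_eq_0 eq_neg_iff_add_eq_0 one_add_one)
        then show False using False cm by simp
      qed
      have oddp: "odd p"
      proof
        assume "even p"
        then have "2 dvd p" by simp
        then show False using pr p2 unfolding prime_nat_iff by auto
      qed
      let ?\<delta> = "qmat_neg \<gamma>"
      have dM: "in_M2 \<O> ?\<delta>" using R.M2_neg[OF inM[OF g]] .
      have dent: "red (m11 ?\<delta>) = 1" "red (m12 ?\<delta>) = 0" "red (m21 ?\<delta>) = 0" "red (m22 ?\<delta>) = 1"
        using ent cm inM[OF g] R.red_neg unfolding qmat_neg_def in_M2_def by auto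
      have pw: "qmat_pow a b ?\<delta> (card \<Gamma> * 2) = qmat_one"
        using qmat_pow_neg[of a b \<gamma> "card \<Gamma> * 2"] Gamma_pow(2)[OF sg fin g] by simp
      have cop2: "coprime (int (card \<Gamma> * 2)) (int p)"
        using copN oddp by (simp add: coprime_commute)
      have "?\<delta> = qmat_one" using R.red_kernel[OF dM dent pw cop2] .
      then have "\<gamma> = qmat_neg qmat_one" using qmat_neg_neg by metis
      then show ?thesis by simp
    qed
  qed
  have reduce: "\<alpha> = \<beta> \<or> \<alpha> = qmat_neg \<beta>" if ab: "\<alpha> \<in> \<Gamma>" "\<beta> \<in> \<Gamma>" and eq: "red2 red \<alpha> = mat c ** red2 red \<beta>" for \<alpha> \<beta> c
  proof -
    obtain \<beta>' where b': "\<beta>' \<in> \<Gamma>" "qmat_mul a b \<beta> \<beta>' = qmat_one" "qmat_mul a b \<beta>' \<beta> = qmat_one"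
      using inv[OF ab(2)] by blast
    let ?\<gamma> = "qmat_mul a b \<beta>' \<alpha>"
    have g: "?\<gamma> \<in> \<Gamma>" using cl b'(1) ab(1) .
    have "red2 red ?\<gamma> = red2 red \<beta>' ** (mat c ** red2 red \<beta>)" using mul[OF b'(1) ab(1)] eq by simp
    also have "\<dots> = mat c ** (red2 red \<beta>' ** red2 red \<beta>)"
      unfolding vec_eq_iff forall_2 by (simp add: matrix_matrix_mult_def mat_def sum_2 algebra_simps)
    also have "\<dots> = mat c"
    proof -
      have "red2 red \<beta>' ** red2 red \<beta> = mat 1" using mul[OF b'(1) ab(2)] b'(3) R.red2_one by simp
      then show ?thesis by (simp add: matrix_mul_rid)
    qed
    finally have "?\<gamma> = qmat_one \<or> ?\<gamma> = qmat_neg qmat_one" using scal[OF g] by blast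
    moreover have "\<alpha> = qmat_mul a b \<beta> ?\<gamma>" using b'(2) by (simp add: qmat_mul_assoc[symmetric] qmat_mul_oneL)
    ultimately show ?thesis by (auto simp: qmat_mul_oneR qmat_mul_negR)
  qed
  have injr: "inj_on (red2 red) \<Gamma>"
  proof (rule inj_onI)
    fix \<alpha> \<beta> assume ab: "\<alpha> \<in> \<Gamma>" "\<beta> \<in> \<Gamma>" "red2 red \<alpha> = red2 red \<beta>"
    obtain \<beta>' where b': "\<beta>' \<in> \<Gamma>" "qmat_mul a b \<beta> \<beta>' = qmat_one" "qmat_mul a b \<beta>' \<beta> = qmat_one"
      using inv[OF ab(2)] by blast
    let ?\<gamma> = "qmat_mul a b \<beta>' \<alpha>"
    have g: "?\<gamma> \<in> \<Gamma>" using cl b'(1) ab(1) .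
    have "red2 red ?\<gamma> = red2 red \<beta>' ** red2 red \<beta>" using mul[OF b'(1) ab(1)] ab(3) by simp
    also have "\<dots> = mat 1" using mul[OF b'(1) ab(2)] b'(3) R.red2_one by simp
    finally have ent: "red (m11 ?\<gamma>) = 1" "red (m12 ?\<gamma>) = 0" "red (m21 ?\<gamma>) = 0" "red (m22 ?\<gamma>) = 1"
      unfolding R.red2_eq_mat by auto
    have "?\<gamma> = qmat_one" using R.red_kernel[OF inM[OF g] ent Gamma_pow(1)[OF sg fin g] copN] .
    moreover have "\<alpha> = qmat_mul a b \<beta> ?\<gamma>" using b'(2) by (simp add: qmat_mul_assoc[symmetric] qmat_mul_oneL)
    ultimately show "\<alpha> = \<beta>" by (simp add: qmat_mul_oneR)
  qed
  show ?thesis using det1 mul injr reduce by blast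
qed

end
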